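(* Let $G_{\lambda,k}$ be a skeleton of a connected graph $G$, and let $G''=G_{(\lambda,k)_{(2,2)}}$ be the $(2,2)$-skeleton of $G_{\lambda,k}$. If two vertices of $G''$ are $2$-disjoint in $G''$, then the sets of vertices of $G_{\lambda,k}$ they come from (their preimages under the natural map $G_{\lambda,k}\to G''$) are $3$-disjoint in $G_{\lambda,k}$.
   Context: $d$ is the graph metric of the relevant graph. Sets $X,Y$ are $r$-disjoint if $d(a,b)>r$ for all $a\in X,b\in Y$. A set $X$ is $k$-connected if any two of its points are joined by a finite sequence in $X$ with consecutive distances $\le k$. Skeleton $\Gamma_{\lambda,k}$ of a connected graph $\Gamma$ (root $x_0$, scale $\lambda\ge1$, connectivity $k\ge1$): layers $A_{N,\lambda}=\{x: N\lambda<d(x,x_0)\le(N+1)\lambda\}$, $N\in\mathbb Z$; blocks are the maximal $k$-connected subsets of layers (distances in $\Gamma$); $\Gamma_{\lambda,k}$ has a vertex per block and an edge between two blocks iff an edge of $\Gamma$ joins them; the natural map sends each vertex to its block. $G_{(\lambda,k)_{(2,2)}}$ is the skeleton of the graph $G_{\lambda,k}$ (with its own metric) with scale $2$ and connectivity $2$, rooted at the block containing the root of $G$. *)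

theory Defs
  imports Main "HOL.Real"
begin

definition walk :: "'a set \<Rightarrow> ('a \<Rightarrow> 'a \<Rightarrow> bool) \<Rightarrow> 'a \<Rightarrow> 'a \<Rightarrow> nat \<Rightarrow> bool" where
  "walk V E x y n \<longleftrightarrow> (\<exists>f. f 0 = x \<and> f n = y \<and> (\<forall>i\<le>n. f i \<in> V) \<and> (\<forall>i<n. E (f i) (f (Suc i))))"

definition connected_graph :: "'a set \<Rightarrow> ('a \<Rightarrow> 'a \<Rightarrow> bool) \<Rightarrow> bool" where
  "connected_graph V E \<longleftrightarrow> V \<noteq> {} \<and> (\<forall>x y. E x y \<longrightarrow> x \<in> V \<and> y \<in> V) \<and>
     (\<forall>x y. E x y \<longrightarrow> E y x) \<and> (\<forall>x\<in>V. \<forall>y\<in>V. \<exists>n. walk V E x y n)"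

text \<open>Graph metric (meaningful for connected graphs).\<close>
definition gdist :: "'a set \<Rightarrow> ('a \<Rightarrow> 'a \<Rightarrow> bool) \<Rightarrow> 'a \<Rightarrow> 'a \<Rightarrow> nat" where
  "gdist V E x y = (LEAST n. walk V E x y n)"

definition r_disjoint :: "'a set \<Rightarrow> ('a \<Rightarrow> 'a \<Rightarrow> bool) \<Rightarrow> real \<Rightarrow> 'a set \<Rightarrow> 'a set \<Rightarrow> bool" where
  "r_disjoint V E r X Y \<longleftrightarrow> (\<forall>a\<in>X. \<forall>b\<in>Y. real (gdist V E a b) > r)"

definition k_connected :: "'a set \<Rightarrow> ('a \<Rightarrow> 'a \<Rightarrow> bool) \<Rightarrow> real \<Rightarrow> 'a set \<Rightarrow> bool" where
  "k_connected V E k X \<longleftrightarrow> (\<forall>a\<in>X. \<forall>b\<in>X. \<exists>n f. f 0 = a \<and> f n = b \<and> (\<forall>i\<le>n. f i \<in> X) \<and>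
       (\<forall>i<n. real (gdist V E (f i) (f (Suc i))) \<le> k))"

definition layer :: "'a set \<Rightarrow> ('a \<Rightarrow> 'a \<Rightarrow> bool) \<Rightarrow> 'a \<Rightarrow> real \<Rightarrow> int \<Rightarrow> 'a set" where
  "layer V E x0 lam N = {x \<in> V. real_of_int N * lam < real (gdist V E x x0) \<and>
                                   real (gdist V E x x0) \<le> (real_of_int N + 1) * lam}"

definition skel_V :: "'a set \<Rightarrow> ('a \<Rightarrow> 'a \<Rightarrow> bool) \<Rightarrow> 'a \<Rightarrow> real \<Rightarrow> real \<Rightarrow> 'a set set" where
  "skel_V V E x0 lam k = {B. B \<noteq> {} \<and> (\<exists>N. B \<subseteq> layer V E x0 lam N \<and> k_connected V E k B \<and>
      (\<forall>C. B \<subseteq> C \<and> C \<subseteq> layer V E x0 lam N \<and> k_connected V E k C \<longrightarrow> C = B))}"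

definition skel_E :: "'a set \<Rightarrow> ('a \<Rightarrow> 'a \<Rightarrow> bool) \<Rightarrow> 'a \<Rightarrow> real \<Rightarrow> real \<Rightarrow> 'a set \<Rightarrow> 'a set \<Rightarrow> bool" where
  "skel_E V E x0 lam k B C \<longleftrightarrow> B \<in> skel_V V E x0 lam k \<and> C \<in> skel_V V E x0 lam k \<and> B \<noteq> C \<and>
      (\<exists>x\<in>B. \<exists>y\<in>C. E x y)"

definition nat_map :: "'a set \<Rightarrow> ('a \<Rightarrow> 'a \<Rightarrow> bool) \<Rightarrow> 'a \<Rightarrow> real \<Rightarrow> real \<Rightarrow> 'a \<Rightarrow> 'a set" where
  "nat_map V E x0 lam k x = (THE B. B \<in> skel_V V E x0 lam k \<and> x \<in> B)"

end

theory Submission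
  imports Defs
begin

lemma walk_refl: "x \<in> V \<Longrightarrow> walk V E x x 0"
  unfolding walk_def by (rule exI[of _ "\<lambda>_. x"]) auto

lemma walk_snoc:
  assumes "walk V E x y n" "E y z" "z \<in> V"
  shows "walk V E x z (Suc n)"
proof -
  obtain f where f: "f 0 = x" "f n = y" "\<forall>i\<le>n. f i \<in> V" "\<forall>i<n. E (f i) (f (Suc i))"
    using assms(1) unfolding walk_def by blast
  let ?g = "f(Suc n := z)"
  have "?g 0 = x" using f by simp
  moreover have "?g (Suc n) = z" by simp
  moreover have "\<forall>i\<le>Suc n. ?g i \<in> V" using f assms(3) by (auto simp: le_Suc_eq)
  moreover have "\<forall>i<Suc n. E (?g i) (?g (Suc i))" using f assms(2) by (auto simp: less_Suc_eq)
  ultimately show ?thesis unfolding walk_def by (intro exI[of _ ?g]) simp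
qed

lemma walk_sym:
  assumes "\<forall>x y. E x y \<longrightarrow> E y x" "walk V E x y n"
  shows "walk V E y x n"
proof -
  obtain f where f: "f 0 = x" "f n = y" "\<forall>i\<le>n. f i \<in> V" "\<forall>i<n. E (f i) (f (Suc i))"
    using assms(2) unfolding walk_def by blast
  let ?g = "\<lambda>i. f (n - i)"
  have "?g 0 = y" "?g n = x" using f by auto
  moreover have "\<forall>i\<le>n. ?g i \<in> V" using f by auto
  moreover have "\<forall>i<n. E (?g i) (?g (Suc i))"
  proof (intro allI impI)
    fix i assume i: "i < n"
    have "Suc (n - Suc i) = n - i" using i by simp
    moreover have "n - Suc i < n" using i by simp
    ultimately have "E (f (n - Suc i)) (f (n - i))" using f(4) by metis
    then show "E (?g i) (?g (Suc i))" using assms(1) by simp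
  qed
  ultimately show ?thesis unfolding walk_def by (intro exI[of _ ?g]) simp
qed

lemma walk_append:
  assumes "walk V E x y n" "walk V E y z m"
  shows "walk V E x z (n + m)"
  using assms(2)
proof (induction m arbitrary: z)
  case 0
  then have "z = y" unfolding walk_def by auto
  then show ?case using assms(1) by simp
next
  case (Suc m)
  obtain f where f: "f 0 = y" "f (Suc m) = z" "\<forall>i\<le>Suc m. f i \<in> V" "\<forall>i<Suc m. E (f i) (f (Suc i))"
    using Suc.prems unfolding walk_def by blast
  have "walk V E y (f m) m" unfolding walk_def
    by (rule exI[of _ f]) (use f in auto)
  then have "walk V E x (f m) (n + m)" using Suc.IH by blast
  then have "walk V E x (f (Suc m)) (Suc (n + m))"
    by (rule walk_snoc) (use f in auto)
  then show ?case using f by simp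
qed

lemma walk_cons:
  assumes "walk V E y z n" "E x y" "x \<in> V"
  shows "walk V E x z (Suc n)"
proof -
  have y: "y \<in> V" using assms(1) unfolding walk_def by auto
  have "walk V E x y (Suc 0)" unfolding walk_def
    by (rule exI[of _ "\<lambda>i. if i = 0 then x else y"]) (use assms(2,3) y in \<open>auto simp: le_Suc_eq\<close>)
  from walk_append[OF this assms(1)] show ?thesis by simp
qed

lemma gdist_sym:
  assumes "\<forall>x y. E x y \<longrightarrow> E y x"
  shows "gdist V E x y = gdist V E y x"
proof -
  have "walk V E x y n = walk V E y x n" for n
    using walk_sym[OF assms, of V x y n] walk_sym[OF assms, of V y x n] by (rule iffI)
  then have "walk V E x y = walk V E y x" by (rule ext)
  then show ?thesis unfolding gdist_def by simp
qed

lemma gdist_le: "walk V E x y n \<Longrightarrow> gdist V E x y \<le> n"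
  unfolding gdist_def by (rule Least_le)

lemma gdist_walk: "walk V E x y n \<Longrightarrow> walk V E x y (gdist V E x y)"
  unfolding gdist_def by (rule LeastI)

lemma conn_walk:
  assumes "connected_graph V E" "x \<in> V" "y \<in> V"
  shows "walk V E x y (gdist V E x y)"
proof -
  obtain n where "walk V E x y n" using assms unfolding connected_graph_def by blast
  then show ?thesis by (rule gdist_walk)
qed

lemma lazy_walk:
  assumes "\<forall>i\<le>n. g i \<in> V" "\<forall>i<n. g i = g (Suc i) \<or> E (g i) (g (Suc i))"
  shows "\<exists>m\<le>n. walk V E (g 0) (g n) m"
  using assms
proof (induction n)
  case 0
  have "g 0 \<in> V" using 0 by simp
  then have "walk V E (g 0) (g 0) 0" by (rule walk_refl)
  then show ?case by blast
next
  case (Suc n)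
  have p1: "\<forall>i\<le>n. g i \<in> V" using Suc.prems(1) by auto
  have p2: "\<forall>i<n. g i = g (Suc i) \<or> E (g i) (g (Suc i))" using Suc.prems(2) by auto
  obtain m where m: "m \<le> n" "walk V E (g 0) (g n) m" using Suc.IH[OF p1 p2] by blast
  show ?case
  proof (cases "g n = g (Suc n)")
    case True
    then have "walk V E (g 0) (g (Suc n)) m" using m(2) by simp
    moreover have "m \<le> Suc n" using m(1) by simp
    ultimately show ?thesis by blast
  next
    case False
    have "g n = g (Suc n) \<or> E (g n) (g (Suc n))" using Suc.prems(2)[rule_format, of n] by simp
    then have e: "E (g n) (g (Suc n))" using False by simp
    have v: "g (Suc n) \<in> V" using Suc.prems(1)[rule_format, of "Suc n"] by simp
    have w: "walk V E (g 0) (g (Suc n)) (Suc m)" by (rule walk_snoc[OF m(2) e v])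
    have "Suc m \<le> Suc n" using m(1) by simp
    then show ?thesis using w by blast
  qed
qed

definition kchain :: "'a set \<Rightarrow> ('a \<Rightarrow> 'a \<Rightarrow> bool) \<Rightarrow> real \<Rightarrow> 'a set \<Rightarrow> 'a \<Rightarrow> 'a \<Rightarrow> bool" where
  "kchain V E k X a b \<longleftrightarrow> (\<exists>n f. f 0 = a \<and> f n = b \<and> (\<forall>i\<le>n. f i \<in> X) \<and>
       (\<forall>i<n. real (gdist V E (f i) (f (Suc i))) \<le> k))"

lemma k_connected_kchain: "k_connected V E k X \<longleftrightarrow> (\<forall>a\<in>X. \<forall>b\<in>X. kchain V E k X a b)"
  unfolding k_connected_def kchain_def by simp

lemma kchain_mono:
  assumes "kchain V E k X a b" "X \<subseteq> Y"
  shows "kchain V E k Y a b"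
proof -
  obtain n f where f: "f 0 = a" "f n = b" "\<forall>i\<le>n. f i \<in> X"
     "\<forall>i<n. real (gdist V E (f i) (f (Suc i))) \<le> k"
    using assms(1) unfolding kchain_def by blast
  have "\<forall>i\<le>n. f i \<in> Y" using f(3) assms(2) by blast
  then show ?thesis unfolding kchain_def
    apply - apply (rule exI[of _ n]) apply (rule exI[of _ f]) using f by simp
qed

lemma kchain_refl: "a \<in> X \<Longrightarrow> kchain V E k X a a"
  unfolding kchain_def apply (rule exI[of _ 0]) apply (rule exI[of _ "\<lambda>_. a"]) by simp

lemma kchain_sym:
  assumes "\<forall>x y. E x y \<longrightarrow> E y x" "kchain V E k X a b"
  shows "kchain V E k X b a"
proof -
  obtain n f where f: "f 0 = a" "f n = b" "\<forall>i\<le>n. f i \<in> X"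
     "\<forall>i<n. real (gdist V E (f i) (f (Suc i))) \<le> k"
    using assms(2) unfolding kchain_def by blast
  let ?g = "\<lambda>i. f (n - i)"
  have "?g 0 = b" "?g n = a" using f by auto
  moreover have "\<forall>i\<le>n. ?g i \<in> X" using f by auto
  moreover have "\<forall>i<n. real (gdist V E (?g i) (?g (Suc i))) \<le> k"
  proof (intro allI impI)
    fix i assume i: "i < n"
    have "real (gdist V E (f (n - Suc i)) (f (Suc (n - Suc i)))) \<le> k" using f i by auto
    moreover have "Suc (n - Suc i) = n - i" using i by simp
    moreover have "gdist V E (f (n - i)) (f (n - Suc i)) = gdist V E (f (n - Suc i)) (f (n - i))"
      by (rule gdist_sym[OF assms(1)])
    ultimately show "real (gdist V E (?g i) (?g (Suc i))) \<le> k" by simp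
  qed
  ultimately have "?g 0 = b \<and> ?g n = a \<and> (\<forall>i\<le>n. ?g i \<in> X) \<and> (\<forall>i<n. real (gdist V E (?g i) (?g (Suc i))) \<le> k)"
    by blast
  then show ?thesis unfolding kchain_def
    apply - apply (rule exI[of _ n]) apply (rule exI[of _ ?g]) by assumption
qed

lemma kchain_trans:
  assumes "kchain V E k X a b" "kchain V E k X b c"
  shows "kchain V E k X a c"
proof -
  obtain n f where f: "f 0 = a" "f n = b" "\<forall>i\<le>n. f i \<in> X"
     "\<forall>i<n. real (gdist V E (f i) (f (Suc i))) \<le> k"
    using assms(1) unfolding kchain_def by blast
  obtain m g where g: "g 0 = b" "g m = c" "\<forall>i\<le>m. g i \<in> X"
     "\<forall>i<m. real (gdist V E (g i) (g (Suc i))) \<le> k"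
    using assms(2) unfolding kchain_def by blast
  let ?h = "\<lambda>i. if i \<le> n then f i else g (i - n)"
  have "?h 0 = a" using f by simp
  moreover have "?h (n + m) = c" using f g by auto
  moreover have "\<forall>i\<le>n+m. ?h i \<in> X" using f g by auto
  moreover have "\<forall>i<n+m. real (gdist V E (?h i) (?h (Suc i))) \<le> k"
  proof (intro allI impI)
    fix i assume i: "i < n + m"
    show "real (gdist V E (?h i) (?h (Suc i))) \<le> k"
    proof (cases "i < n")
      case True then show ?thesis using f by auto
    next
      case False
      then have "i - n < m" "Suc i - n = Suc (i - n)" using i by auto
      show ?thesis
      proof (cases "i = n")
        case True
        then have "?h i = g 0" "?h (Suc i) = g 1" using f g by auto
        moreover have "real (gdist V E (g 0) (g (Suc 0))) \<le> k" using g(4) \<open>i - n < m\<close> True by simp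
        ultimately show ?thesis by simp
      next
        case F2: False
        then have "?h i = g (i - n)" "?h (Suc i) = g (Suc (i - n))" using False \<open>Suc i - n = Suc (i - n)\<close> by auto
        then show ?thesis using g \<open>i - n < m\<close> by simp
      qed
    qed
  qed
  ultimately have "?h 0 = a \<and> ?h (n+m) = c \<and> (\<forall>i\<le>n+m. ?h i \<in> X) \<and> (\<forall>i<n+m. real (gdist V E (?h i) (?h (Suc i))) \<le> k)"
    by blast
  then show ?thesis unfolding kchain_def
    apply - apply (rule exI[of _ "n+m"]) apply (rule exI[of _ ?h]) by assumption
qed

lemma kchain_prefix:
  assumes "f 0 = a" "\<forall>i\<le>n. f i \<in> X" "\<forall>i<n. real (gdist V E (f i) (f (Suc i))) \<le> k" "j \<le> n"
  shows "kchain V E k X a (f j)"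
  unfolding kchain_def
  by (rule exI[of _ j], rule exI[of _ f]) (use assms in auto)

definition compN where
  "compN V E x0 lam k N x = {y. kchain V E k (layer V E x0 lam N) x y}"

lemma layer_unique:
  assumes "lam > 0" "x \<in> layer V E x0 lam N" "x \<in> layer V E x0 lam M"
  shows "N = M"
proof (rule ccontr)
  assume ne: "N \<noteq> M"
  let ?d = "real (gdist V E x x0)"
  have a: "real_of_int N * lam < ?d" "?d \<le> (real_of_int N + 1) * lam"
      "real_of_int M * lam < ?d" "?d \<le> (real_of_int M + 1) * lam"
    using assms unfolding layer_def by auto
  show False
  proof (cases "N < M")
    case True
    then have "real_of_int N + 1 \<le> real_of_int M" by linarith
    then have "(real_of_int N + 1) * lam \<le> real_of_int M * lam"
      using assms(1) by (intro mult_right_mono) auto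
    then show False using a by linarith
  next
    case False
    then have "real_of_int M + 1 \<le> real_of_int N" using ne by linarith
    then have "(real_of_int M + 1) * lam \<le> real_of_int N * lam"
      using assms(1) by (intro mult_right_mono) auto
    then show False using a by linarith
  qed
qed

lemma layer_exists:
  assumes "lam > 0" "x \<in> V"
  shows "\<exists>N. x \<in> layer V E x0 lam N"
proof -
  let ?d = "real (gdist V E x x0)"
  let ?c = "ceiling (?d / lam)"
  have h1: "real_of_int ?c - 1 < ?d / lam" and h2: "?d / lam \<le> real_of_int ?c"
    by linarith+
  have "(real_of_int ?c - 1) * lam < ?d"
    using h1 assms(1) by (simp add: field_simps)
  moreover have "?d \<le> real_of_int ?c * lam"
    using pos_divide_le_eq[OF assms(1)] h2 by blast
  ultimately have "(real_of_int ?c - 1) * lam < ?d" "?d \<le> real_of_int ?c * lam" by auto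
  then have "x \<in> layer V E x0 lam (?c - 1)"
    unfolding layer_def using assms(2) by simp
  then show ?thesis by blast
qed

lemma comp_in_skel:
  assumes sym: "\<forall>x y. E x y \<longrightarrow> E y x" and x: "x \<in> layer V E x0 lam N"
  shows "compN V E x0 lam k N x \<in> skel_V V E x0 lam k" "x \<in> compN V E x0 lam k N x"
proof -
  let ?L = "layer V E x0 lam N"
  let ?C = "compN V E x0 lam k N x"
  show xin: "x \<in> ?C" unfolding compN_def by (rule CollectI, rule kchain_refl[OF x])
  have sub: "?C \<subseteq> ?L"
  proof
    fix y assume "y \<in> ?C"
    then have "kchain V E k ?L x y" unfolding compN_def by simp
    then obtain n f where f: "f 0 = x" "f n = y" "\<forall>i\<le>n. f i \<in> ?L"
       "\<forall>i<n. real (gdist V E (f i) (f (Suc i))) \<le> k"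
      unfolding kchain_def by blast
    have "f n \<in> ?L" using f(3) by simp
    then show "y \<in> ?L" using f(2) by simp
  qed
  have kc: "k_connected V E k ?C"
    unfolding k_connected_kchain
  proof (intro ballI)
    fix a b assume a: "a \<in> ?C" and b: "b \<in> ?C"
    have xa: "kchain V E k ?L x a" and xb: "kchain V E k ?L x b"
      using a b unfolding compN_def by auto
    have "kchain V E k ?L a b" using kchain_trans[OF kchain_sym[OF sym xa] xb] .
    then obtain n f where f: "f 0 = a" "f n = b" "\<forall>i\<le>n. f i \<in> ?L"
       "\<forall>i<n. real (gdist V E (f i) (f (Suc i))) \<le> k"
      unfolding kchain_def by blast
    have "\<forall>i\<le>n. f i \<in> ?C"
    proof (intro allI impI)
      fix j assume "j \<le> n"
      then have "kchain V E k ?L a (f j)" by (rule kchain_prefix[OF f(1) f(3) f(4)])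
      then have "kchain V E k ?L x (f j)" by (rule kchain_trans[OF xa])
      then show "f j \<in> ?C" unfolding compN_def by simp
    qed
    then show "kchain V E k ?C a b" unfolding kchain_def
      apply - apply (rule exI[of _ n]) apply (rule exI[of _ f]) using f by simp
  qed
  have max: "\<forall>C. ?C \<subseteq> C \<and> C \<subseteq> ?L \<and> k_connected V E k C \<longrightarrow> C = ?C"
  proof (intro allI impI)
    fix C assume h: "?C \<subseteq> C \<and> C \<subseteq> ?L \<and> k_connected V E k C"
    have "C \<subseteq> ?C"
    proof
      fix c assume "c \<in> C"
      moreover have "x \<in> C" using h xin by (meson subsetD)
      moreover have "\<forall>a\<in>C. \<forall>b\<in>C. kchain V E k C a b" using h unfolding k_connected_kchain by simp
      ultimately have "kchain V E k C x c" by simp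
      then have "kchain V E k ?L x c" by (rule kchain_mono) (use h in simp)
      then show "c \<in> ?C" unfolding compN_def by simp
    qed
    then show "C = ?C" using h by (simp add: subset_antisym)
  qed
  have "?C \<noteq> {}" using xin by auto
  then show "?C \<in> skel_V V E x0 lam k" unfolding skel_V_def mem_Collect_eq
    apply - apply (rule conjI, assumption) apply (rule exI[of _ N])
    using sub kc max by simp
qed

lemma block_eq_comp:
  assumes "lam > 0" "B \<in> skel_V V E x0 lam k" "x \<in> B" "x \<in> layer V E x0 lam M"
    and sym: "\<forall>x y. E x y \<longrightarrow> E y x"
  shows "B = compN V E x0 lam k M x"
proof -
  obtain N where N: "B \<subseteq> layer V E x0 lam N" "k_connected V E k B"
    "\<forall>C. B \<subseteq> C \<and> C \<subseteq> layer V E x0 lam N \<and> k_connected V E k C \<longrightarrow> C = B"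
    using assms(2) unfolding skel_V_def by blast
  have "x \<in> layer V E x0 lam N" using N(1) assms(3) by (meson subsetD)
  then have NM: "N = M" using layer_unique[OF assms(1) _ assms(4)] by simp
  have kB: "\<forall>a\<in>B. \<forall>b\<in>B. kchain V E k B a b" using N(2) unfolding k_connected_kchain by simp
  have "B \<subseteq> compN V E x0 lam k M x"
  proof
    fix b assume "b \<in> B"
    then have "kchain V E k B x b" using kB assms(3) by simp
    then have "kchain V E k (layer V E x0 lam M) x b" by (rule kchain_mono) (use N(1) NM in simp)
    then show "b \<in> compN V E x0 lam k M x" unfolding compN_def by simp
  qed
  moreover have "compN V E x0 lam k M x \<in> skel_V V E x0 lam k" by (rule comp_in_skel(1)[OF sym assms(4)])
  then obtain N' where "compN V E x0 lam k M x \<subseteq> layer V E x0 lam N'" "k_connected V E k (compN V E x0 lam k M x)"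
    unfolding skel_V_def by blast
  moreover have "compN V E x0 lam k M x \<subseteq> layer V E x0 lam N"
  proof
    fix y assume "y \<in> compN V E x0 lam k M x"
    then have "kchain V E k (layer V E x0 lam M) x y" unfolding compN_def by simp
    then obtain n f where f: "f 0 = x" "f n = y" "\<forall>i\<le>n. f i \<in> layer V E x0 lam M"
       "\<forall>i<n. real (gdist V E (f i) (f (Suc i))) \<le> k"
      unfolding kchain_def by blast
    have "f n \<in> layer V E x0 lam M" using f(3) by simp
    then show "y \<in> layer V E x0 lam N" using f(2) NM by simp
  qed
  ultimately show ?thesis using N(3) by metis
qed

lemma conn_sym: "connected_graph V E \<Longrightarrow> \<forall>x y. E x y \<longrightarrow> E y x"
  unfolding connected_graph_def by simp

lemma nat_map_props:
  assumes "connected_graph V E" "lam > 0" "x \<in> V"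
  shows "nat_map V E x0 lam k x \<in> skel_V V E x0 lam k" "x \<in> nat_map V E x0 lam k x"
    "\<And>B. B \<in> skel_V V E x0 lam k \<Longrightarrow> x \<in> B \<Longrightarrow> nat_map V E x0 lam k x = B"
proof -
  have sym: "\<forall>x y. E x y \<longrightarrow> E y x" by (rule conn_sym[OF assms(1)])
  obtain M where M: "x \<in> layer V E x0 lam M" using layer_exists[OF assms(2,3), of E x0] by blast
  let ?C = "compN V E x0 lam k M x"
  have C1: "?C \<in> skel_V V E x0 lam k" by (rule comp_in_skel(1)[OF sym M])
  have C2: "x \<in> ?C" by (rule comp_in_skel(2)[OF sym M])
  have U: "B = ?C" if "B \<in> skel_V V E x0 lam k" "x \<in> B" for B
    by (rule block_eq_comp[OF assms(2) that M sym])
  have eq: "nat_map V E x0 lam k x = ?C" unfolding nat_map_def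
  proof (rule the_equality)
    show "?C \<in> skel_V V E x0 lam k \<and> x \<in> ?C" using C1 C2 by (rule conjI)
    show "B = ?C" if "B \<in> skel_V V E x0 lam k \<and> x \<in> B" for B
      using U that by simp
  qed
  show "nat_map V E x0 lam k x \<in> skel_V V E x0 lam k" using eq C1 by simp
  show "x \<in> nat_map V E x0 lam k x" using eq C2 by simp
  show "nat_map V E x0 lam k x = B" if "B \<in> skel_V V E x0 lam k" "x \<in> B" for B
    using eq U[OF that] by simp
qed

lemma same_block:
  assumes "connected_graph V E" "lam > 0" "x \<in> layer V E x0 lam N" "y \<in> layer V E x0 lam N"
    "real (gdist V E x y) \<le> k"
  shows "nat_map V E x0 lam k x = nat_map V E x0 lam k y"
proof -
  have sym: "\<forall>x y. E x y \<longrightarrow> E y x" by (rule conn_sym[OF assms(1)])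
  have xV: "x \<in> V" using assms(3) unfolding layer_def by simp
  have yV: "y \<in> V" using assms(4) unfolding layer_def by simp
  let ?C = "compN V E x0 lam k N x"
  have C1: "?C \<in> skel_V V E x0 lam k" by (rule comp_in_skel(1)[OF sym assms(3)])
  have C2: "x \<in> ?C" by (rule comp_in_skel(2)[OF sym assms(3)])
  have "kchain V E k (layer V E x0 lam N) x y" unfolding kchain_def
    apply (rule exI[of _ "Suc 0"]) apply (rule exI[of _ "\<lambda>i. if i = 0 then x else y"])
    using assms(3,4,5) by (auto simp: le_Suc_eq)
  then have yC: "y \<in> ?C" unfolding compN_def by simp
  have "nat_map V E x0 lam k x = ?C" by (rule nat_map_props(3)[OF assms(1,2) xV C1 C2])
  moreover have "nat_map V E x0 lam k y = ?C" by (rule nat_map_props(3)[OF assms(1,2) yV C1 yC])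
  ultimately show ?thesis by simp
qed

lemma skel_sub:
  assumes "B \<in> skel_V V E x0 lam k" shows "B \<subseteq> V"
proof -
  obtain N where "B \<subseteq> layer V E x0 lam N" using assms unfolding skel_V_def by blast
  moreover have "layer V E x0 lam N \<subseteq> V" unfolding layer_def by simp
  ultimately show ?thesis by (rule subset_trans)
qed

lemma skel_ne: "B \<in> skel_V V E x0 lam k \<Longrightarrow> \<exists>x. x \<in> B"
  unfolding skel_V_def by (simp add: ex_in_conv)

lemma skel_connected:
  assumes "connected_graph V E" "x0 \<in> V" "lam > 0"
  shows "connected_graph (skel_V V E x0 lam k) (skel_E V E x0 lam k)"
proof -
  let ?V = "skel_V V E x0 lam k" and ?E = "skel_E V E x0 lam k" and ?m = "nat_map V E x0 lam k"
  have sym: "\<forall>x y. E x y \<longrightarrow> E y x" by (rule conn_sym[OF assms(1)])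
  have c1: "?V \<noteq> {}" using nat_map_props(1)[OF assms(1,3,2)] by (metis empty_iff)
  have c2: "\<forall>x y. ?E x y \<longrightarrow> x \<in> ?V \<and> y \<in> ?V" unfolding skel_E_def by simp
  have c3: "\<forall>x y. ?E x y \<longrightarrow> ?E y x"
  proof (intro allI impI)
    fix B C assume "?E B C"
    then have h: "B \<in> ?V" "C \<in> ?V" "B \<noteq> C" "\<exists>x\<in>B. \<exists>y\<in>C. E x y" unfolding skel_E_def by simp_all
    from h(4) obtain x y where "x \<in> B" "y \<in> C" "E x y" by blast
    then have "\<exists>x\<in>C. \<exists>y\<in>B. E x y" using sym by blast
    then show "?E C B" unfolding skel_E_def using h by simp
  qed
  have c4: "\<forall>B\<in>?V. \<forall>C\<in>?V. \<exists>n. walk ?V ?E B C n"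
  proof (intro ballI)
    fix B C assume B: "B \<in> ?V" and C: "C \<in> ?V"
    obtain x where x: "x \<in> B" using skel_ne[OF B] by (elim exE)
    obtain y where y: "y \<in> C" using skel_ne[OF C] by (elim exE)
    have xV: "x \<in> V" using x skel_sub[OF B] by (rule subsetD[rotated])
    have yV: "y \<in> V" using y skel_sub[OF C] by (rule subsetD[rotated])
    have "walk V E x y (gdist V E x y)" by (rule conn_walk[OF assms(1) xV yV])
    then obtain n f where f: "f 0 = x" "f n = y" "\<forall>i\<le>n. f i \<in> V" "\<forall>i<n. E (f i) (f (Suc i))"
      unfolding walk_def by blast
    have mV: "?m z \<in> ?V" "z \<in> ?m z" if "z \<in> V" for z
      using nat_map_props(1,2)[OF assms(1,3) that] by simp_all
    have IH: "\<exists>m. walk ?V ?E B (?m (f i)) m" if "i \<le> n" for i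
      using that
    proof (induction i)
      case 0
      have "?m x = B" by (rule nat_map_props(3)[OF assms(1,3) xV B x])
      then have "?m (f 0) = B" using f(1) by simp
      then show ?case using walk_refl[OF B] by auto
    next
      case (Suc i)
      have "i \<le> n" using Suc.prems by simp
      then obtain m where m: "walk ?V ?E B (?m (f i)) m" using Suc.IH by blast
      have fi: "f i \<in> V" using f(3) \<open>i \<le> n\<close> by simp
      have fi2: "f (Suc i) \<in> V" using f(3) Suc.prems by simp
      have ed: "E (f i) (f (Suc i))" using f(4) Suc.prems by simp
      show ?case
      proof (cases "?m (f i) = ?m (f (Suc i))")
        case True then show ?thesis using m by auto
      next
        case False
        have "\<exists>a\<in>?m (f i). \<exists>b\<in>?m (f (Suc i)). E a b" using mV(2)[OF fi] mV(2)[OF fi2] ed by blast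
        then have "?E (?m (f i)) (?m (f (Suc i)))" unfolding skel_E_def
          using False mV(1)[OF fi] mV(1)[OF fi2] by simp
        then have "walk ?V ?E B (?m (f (Suc i))) (Suc m)"
          by (rule walk_snoc[OF m _ mV(1)[OF fi2]])
        then show ?thesis by blast
      qed
    qed
    have "?m y = C" by (rule nat_map_props(3)[OF assms(1,3) yV C y])
    then show "\<exists>n. walk ?V ?E B C n" using IH[of n] f(2) by simp
  qed
  show ?thesis unfolding connected_graph_def using c1 c2 c3 c4 by simp
qed

lemma lazy_gdist:
  assumes "\<forall>j\<le>n. g (i + j) \<in> V" "\<forall>j<n. g (i + j) = g (Suc (i + j)) \<or> E (g (i + j)) (g (Suc (i + j)))"
  shows "gdist V E (g i) (g (i + n)) \<le> n"
proof -
  have "\<exists>m\<le>n. walk V E ((\<lambda>j. g (i + j)) 0) ((\<lambda>j. g (i + j)) n) m"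
    by (rule lazy_walk) (use assms in auto)
  then obtain m where "m \<le> n" "walk V E (g i) (g (i + n)) m" by auto
  then show ?thesis using gdist_le by fastforce
qed

lemma layer_nat:
  assumes "w \<in> V"
  shows "w \<in> layer V E x0 2 (int ((gdist V E w x0 + 1) div 2) - 1)"
proof -
  let ?d = "gdist V E w x0"
  let ?q = "(?d + 1) div 2"
  have "2 * ?q \<le> ?d + 1" "?d \<le> 2 * ?q" by presburger+
  then have "real (2 * ?q) \<le> real ?d + 1" "real ?d \<le> real (2 * ?q)" by linarith+
  then show ?thesis unfolding layer_def using assms by simp
qed

lemma arith4:
  fixes a b c e :: nat
  assumes "(a+1) div 2 \<noteq> (b+1) div 2" "(b+1) div 2 \<noteq> (c+1) div 2" "(c+1) div 2 \<noteq> (e+1) div 2"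
    "(a+1) div 2 \<noteq> (c+1) div 2" "(b+1) div 2 \<noteq> (e+1) div 2"
    "a \<le> b + 1" "b \<le> a + 1" "b \<le> c + 1" "c \<le> b + 1" "c \<le> e + 1" "e \<le> c + 1"
  shows False
proof -
  have d: "2 * ((x+1) div 2) \<le> x + 1" "x + 1 \<le> 2 * ((x+1) div 2) + 1" for x :: nat by auto
  show False using assms d[of a] d[of b] d[of c] d[of e] by linarith
qed

theorem lemma5:
  fixes V :: "'a set" and E :: "'a \<Rightarrow> 'a \<Rightarrow> bool" and x0 :: 'a
    and lam k :: real and P Q :: "'a set set"
  assumes "connected_graph V E" and "x0 \<in> V" and "lam \<ge> 1" and "k \<ge> 1"
  defines "V' \<equiv> skel_V V E x0 lam k"
      and "E' \<equiv> skel_E V E x0 lam k"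
      and "r' \<equiv> nat_map V E x0 lam k x0"
  assumes "P \<in> skel_V V' E' r' 2 2" and "Q \<in> skel_V V' E' r' 2 2"
      and "r_disjoint (skel_V V' E' r' 2 2) (skel_E V' E' r' 2 2) 2 {P} {Q}"
  shows "r_disjoint V' E' 3 {v \<in> V'. nat_map V' E' r' 2 2 v = P} {v \<in> V'. nat_map V' E' r' 2 2 v = Q}"
proof -
  have lam: "lam > 0" using assms(3) by simp
  have cG': "connected_graph V' E'" unfolding V'_def E'_def by (rule skel_connected[OF assms(1,2) lam])
  have r': "r' \<in> V'" unfolding r'_def V'_def using nat_map_props(1)[OF assms(1) lam assms(2)] .
  have symE': "\<forall>x y. E' x y \<longrightarrow> E' y x" using cG' unfolding connected_graph_def by blast
  define V'' where "V'' = skel_V V' E' r' 2 2"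
  define E'' where "E'' = skel_E V' E' r' 2 2"
  define mm where "mm = nat_map V' E' r' 2 2"
  define d where "d w = gdist V' E' w r'" for w
  have two: "(2::real) > 0" by simp
  have mmV: "mm w \<in> V''" "w \<in> mm w" if "w \<in> V'" for w
    using nat_map_props(1,2)[OF cG' two that] unfolding mm_def V''_def by auto
  have dstep: "d w \<le> d w' + 1" if "w \<in> V'" "w' \<in> V'" "w = w' \<or> E' w w'" for w w'
  proof -
    have wk: "walk V' E' w' r' (d w')" unfolding d_def by (rule conn_walk[OF cG' that(2) r'])
    show ?thesis
    proof (cases "w = w'")
      case True then show ?thesis by simp
    next
      case False
      then have "walk V' E' w r' (Suc (d w'))" using walk_cons[OF wk _ that(1)] that(3) by blast
      then show ?thesis unfolding d_def using gdist_le by fastforce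
    qed
  qed
  have sameb: "mm w = mm w'" if "w \<in> V'" "w' \<in> V'" "real (gdist V' E' w w') \<le> 2"
    "(d w + 1) div 2 = (d w' + 1) div 2" for w w'
  proof -
    have "w \<in> layer V' E' r' 2 (int ((d w + 1) div 2) - 1)" using layer_nat[OF that(1)] unfolding d_def .
    moreover have "w' \<in> layer V' E' r' 2 (int ((d w + 1) div 2) - 1)"
      using layer_nat[OF that(2)] that(4) unfolding d_def by simp
    ultimately show ?thesis unfolding mm_def using same_block[OF cG' two _ _ that(3)] by blast
  qed
  have Sstep: "mm w = mm w' \<or> E'' (mm w) (mm w')" if "w \<in> V'" "w' \<in> V'" "w = w' \<or> E' w w'" for w w'
  proof (cases "mm w = mm w'")
    case False
    then have "E' w w'" using that by auto
    then show ?thesis unfolding E''_def skel_E_def using False mmV[OF that(1)] mmV[OF that(2)]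
      unfolding V''_def mm_def by blast
  qed simp
  have PQ: "\<not> gdist V'' E'' P Q \<le> 2"
    using assms(10) unfolding r_disjoint_def V''_def E''_def by auto
  show ?thesis unfolding r_disjoint_def
  proof (intro ballI)
    fix a b assume a: "a \<in> {v \<in> V'. nat_map V' E' r' 2 2 v = P}" and b: "b \<in> {v \<in> V'. nat_map V' E' r' 2 2 v = Q}"
    have aV: "a \<in> V'" "mm a = P" and bV: "b \<in> V'" "mm b = Q" using a b unfolding mm_def by auto
    show "3 < real (gdist V' E' a b)"
    proof (rule ccontr)
      assume "\<not> 3 < real (gdist V' E' a b)"
      then have L3: "gdist V' E' a b \<le> 3" by simp
      define L where "L = gdist V' E' a b"
      have wL: "walk V' E' a b L" unfolding L_def by (rule conn_walk[OF cG' aV(1) bV(1)])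
      then obtain f where f: "f 0 = a" "f L = b" "\<forall>i\<le>L. f i \<in> V'" "\<forall>i<L. E' (f i) (f (Suc i))"
        unfolding walk_def by blast
      define g where "g i = f (min i L)" for i
      have g03: "g 0 = a" "g 3 = b" using f L3 unfolding g_def L_def by (auto simp: min_def)
      have gV: "g i \<in> V'" for i using f(3) unfolding g_def by auto
      have gS: "g i = g (Suc i) \<or> E' (g i) (g (Suc i))" for i
      proof (cases "i < L")
        case True then show ?thesis using f(4) unfolding g_def by (simp add: min_def)
      next
        case False then show ?thesis unfolding g_def by (simp add: min_def)
      qed
      have g1: "real (gdist V' E' (g i) (g (Suc i))) \<le> 2" for i
        using lazy_gdist[of 1 g i V' E'] gV gS by simp
      have g2: "real (gdist V' E' (g i) (g (Suc (Suc i)))) \<le> 2" for i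
      proof -
        have "gdist V' E' (g i) (g (i + 2)) \<le> 2"
          by (rule lazy_gdist) (use gV gS in auto)
        then show ?thesis by simp
      qed
      have ds: "d (g i) \<le> d (g (Suc i)) + 1" "d (g (Suc i)) \<le> d (g i) + 1" for i
        using dstep gV gS symE' by blast+
      define B where "B i = mm (g i)" for i
      have BV: "B i \<in> V''" for i unfolding B_def using mmV gV by blast
      have BS: "B i = B (Suc i) \<or> E'' (B i) (B (Suc i))" for i unfolding B_def using Sstep gV gS by blast
      have B03: "B 0 = P" "B 3 = Q" unfolding B_def using g03 aV bV by auto
      have ne1: "(d (g i) + 1) div 2 \<noteq> (d (g (Suc i)) + 1) div 2" if "B i \<noteq> B (Suc i)" for i
        using sameb[OF gV gV g1] that unfolding B_def by blast
      have ne2: "(d (g i) + 1) div 2 \<noteq> (d (g (Suc (Suc i))) + 1) div 2" if "B i \<noteq> B (Suc (Suc i))" for i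
        using sameb[OF gV gV g2] that unfolding B_def by blast
      have "\<exists>X. X \<in> V'' \<and> (P = X \<or> E'' P X) \<and> (X = Q \<or> E'' X Q)"
      proof -
        have b0: "B 0 = B 1 \<or> E'' (B 0) (B 1)" using BS[of 0] by simp
        have b1: "B 1 = B 2 \<or> E'' (B 1) (B 2)" using BS[of 1] by (simp add: numeral_2_eq_2)
        have b2: "B 2 = B 3 \<or> E'' (B 2) (B 3)" using BS[of 2] by (simp add: numeral_3_eq_3 numeral_2_eq_2)
        consider "B 0 = B 1" | "B 1 = B 2" | "B 2 = B 3" | "B 0 = B 2" | "B 1 = B 3"
          | "B 0 \<noteq> B 1" "B 1 \<noteq> B 2" "B 2 \<noteq> B 3" "B 0 \<noteq> B 2" "B 1 \<noteq> B 3" by blast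
        then show ?thesis
        proof cases
          case 1 then show ?thesis using BV[of 2] b1 b2 B03 by metis
        next
          case 2 then show ?thesis using BV[of 1] b0 b2 B03 by metis
        next
          case 3 then show ?thesis using BV[of 1] b0 b1 B03 by metis
        next
          case 4 then show ?thesis using BV[of 2] b2 B03 by metis
        next
          case 5 then show ?thesis using BV[of 1] b0 B03 by metis
        next
          case 6
          have n: "(d (g 0) + 1) div 2 \<noteq> (d (g 1) + 1) div 2"
             "(d (g 1) + 1) div 2 \<noteq> (d (g 2) + 1) div 2"
             "(d (g 2) + 1) div 2 \<noteq> (d (g 3) + 1) div 2"
             "(d (g 0) + 1) div 2 \<noteq> (d (g 2) + 1) div 2"
             "(d (g 1) + 1) div 2 \<noteq> (d (g 3) + 1) div 2"
            using ne1[of 0] ne1[of 1] ne1[of 2] ne2[of 0] ne2[of 1] 6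
            by (simp_all add: numeral_3_eq_3 numeral_2_eq_2)
          have e: "d (g 0) \<le> d (g 1) + 1" "d (g 1) \<le> d (g 0) + 1"
             "d (g 1) \<le> d (g 2) + 1" "d (g 2) \<le> d (g 1) + 1"
             "d (g 2) \<le> d (g 3) + 1" "d (g 3) \<le> d (g 2) + 1"
            using ds[of 0] ds[of 1] ds[of 2] by (simp_all add: numeral_3_eq_3 numeral_2_eq_2)
          have False by (rule arith4[OF n e])
          then show ?thesis by blast
        qed
      qed
      then obtain X where X: "X \<in> V''" "P = X \<or> E'' P X" "X = Q \<or> E'' X Q" by blast
      define h where "h j = (if j = 0 then P else if j = 1 then X else Q)" for j :: nat
      have "gdist V'' E'' (h 0) (h (0 + 2)) \<le> 2"
      proof (rule lazy_gdist)
        show "\<forall>j\<le>2. h (0 + j) \<in> V''" using X assms(8,9) unfolding h_def V''_def by auto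
        show "\<forall>j<2. h (0 + j) = h (Suc (0 + j)) \<or> E'' (h (0 + j)) (h (Suc (0 + j)))"
          using X unfolding h_def by (auto simp: less_2_cases_iff)
      qed
      then show False using PQ unfolding h_def by simp
    qed
  qed
qed

end
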